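(* Let $X$ be a block-independent process and suppose that $Z$ is admissible with respect to $Z^\star$. Then \[ I(X;Z(X))=I(X;Z^\star(X))=\lim_{n\to\infty}\frac{I(X_1^n;Z^\star(X_1^n))}{n}, \] and the limit on the right-hand side exists.
   Context: A process $X=(X_i)_{i\in\mathbb N}$ (with $X_m^n=(X_m,\dots,X_n)$) is block-independent with blocklength $b$ if for every $t\ge1$ and $n=tb$, $\Pr[X_1^n=x_1^n]=\prod_{i=1}^t\Pr[X_1^b=x_{(i-1)b+1}^{ib}]$. A channel $Z$ with finite input alphabet assigns to each finite input string $x$ a random output $Z(x)$ in a discrete set; applying a channel to several inputs means independent applications. $A\to B\to C$ denotes a Markov chain; logs base 2. Information rate $I(X;Z(X))=\liminf_n I(X_1^n;Z(X_1^n))/n$. $Z$ is admissible with respect to $Z^\star$ (same input alphabet) if: (1) there is $c>0$ with $H(Z^\star(X_1^n))\le cn$ for every process $X$ and $n\ge1$; (2) $I(X;Z(X))=I(X;Z^\star(X))$ for every process $X$; (3) for every $X$ and $1\le m\le n$: $X_1^n\to Z^\star(X_1^m),Z^\star(X_{m+1}^n)\to Z^\star(X_1^n)$; (4a) for every integer $\tau\ge1$ there is a non-decreasing $\gamma_m=o(m)$ with $\sum_m\gamma_m/m^2<\infty$ such that for every $X$ and $n\ge\tau$ there are $W_{\mathrm{pre}},W_{\mathrm{suf}}$ with $X_1^n\to Z^\star(X_1^n),W_{\mathrm{pre}}\to Z^\star(X_1^\tau),Z^\star(X_{\tau+1}^n)$, $X_1^n\to Z^\star(X_1^n),W_{\mathrm{suf}}\to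 Z^\star(X_1^{n-\tau}),Z^\star(X_{n-\tau+1}^n)$, $H(W_{\mathrm{pre}}),H(W_{\mathrm{suf}})\le\gamma_n$; (4b) there is $\alpha_m=o(m)$ such that for every $X$, $b$, $t$ there is $W$ with $X_1^{tb}\to Z^\star(X_1^{tb}),W\to Z^\star(X_1^b),\dots,Z^\star(X_{(t-1)b+1}^{tb})$ and $H(W)\le t\alpha_b$; (5) there is $\beta_m=o(m)$ such that for every $X$, $b$, $t$ there are $Y$ with $X_1^{tb}\to Z^\star(X_1^b),\dots,Z^\star(X_{(t-1)b+1}^{tb})\to Y$ and a deterministic $\phi$ with $Z^\star(X_1^{tb})=\phi(Z^\star(X_1^b),\dots,Z^\star(X_{(t-1)b+1}^{tb}),Y)$ and $\max_z\log|\phi^{-1}(z)|\le t\beta_b$. *)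

theory Defs
  imports "HOL-Probability.Probability" "HOL-Library.Landau_Symbols"
begin

text \<open>A process X = (X_i) is represented by its finite-dimensional laws:
  P n is the law of X_1^n (a string of length n); the family is consistent.\<close>

definition is_process :: "(nat \<Rightarrow> 'a list pmf) \<Rightarrow> bool" where
  "is_process P \<longleftrightarrow>
     (\<forall>n. \<forall>x\<in>set_pmf (P n). length x = n) \<and>
     (\<forall>m n. m \<le> n \<longrightarrow> map_pmf (take m) (P n) = P m)"

text \<open>i-th block (0-based) of length b, i.e. x_{ib+1}^{(i+1)b}.\<close>
definition blk :: "nat \<Rightarrow> nat \<Rightarrow> 'a list \<Rightarrow> 'a list" where
  "blk b i x = take b (drop (i * b) x)"

definition blocks :: "nat \<Rightarrow> nat \<Rightarrow> 'a list \<Rightarrow> 'a list list" where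
  "blocks b t x = map (\<lambda>i. blk b i x) [0..<t]"

definition block_independent :: "(nat \<Rightarrow> 'a list pmf) \<Rightarrow> nat \<Rightarrow> bool" where
  "block_independent P b \<longleftrightarrow>
     (\<forall>t\<ge>1. \<forall>x. length x = t * b \<longrightarrow>
        pmf (P (t * b)) x = (\<Prod>i<t. pmf (P b) (blk b i x)))"

definition block_indep_process :: "(nat \<Rightarrow> 'a list pmf) \<Rightarrow> bool" where
  "block_indep_process P \<longleftrightarrow> is_process P \<and> (\<exists>b\<ge>1. block_independent P b)"

fun indep_list :: "'c pmf list \<Rightarrow> 'c list pmf" where
  "indep_list [] = return_pmf []"
| "indep_list (p # ps) = bind_pmf p (\<lambda>z. map_pmf (Cons z) (indep_list ps))"

definition chan_joint :: "('a list \<Rightarrow> 'c pmf) \<Rightarrow> 'a list pmf \<Rightarrow> ('a list \<times> 'c) pmf" where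
  "chan_joint Z p = bind_pmf p (\<lambda>x. map_pmf (Pair x) (Z x))"

definition chan_joint2 ::
  "('a list \<Rightarrow> 'c pmf) \<Rightarrow> ('a list \<Rightarrow> 'a list) \<Rightarrow> ('a list \<Rightarrow> 'a list) \<Rightarrow> 'a list pmf
     \<Rightarrow> ('a list \<times> ('c \<times> 'c)) pmf" where
  "chan_joint2 Z f g p =
     bind_pmf p (\<lambda>x. bind_pmf (Z (f x)) (\<lambda>z1. map_pmf (\<lambda>z2. (x, (z1, z2))) (Z (g x))))"

definition chan_blocks ::
  "('a list \<Rightarrow> 'c pmf) \<Rightarrow> nat \<Rightarrow> nat \<Rightarrow> 'a list pmf \<Rightarrow> ('a list \<times> 'c list) pmf" where
  "chan_blocks Z b t p =
     bind_pmf p (\<lambda>x. map_pmf (Pair x) (indep_list (map Z (blocks b t x))))"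

definition ent :: "'x pmf \<Rightarrow> ereal" where
  "ent p = enn2ereal (\<integral>\<^sup>+ x. ennreal (- log 2 (pmf p x)) \<partial>measure_pmf p)"

definition minfo :: "('x \<times> 'y) pmf \<Rightarrow> real" where
  "minfo q = (\<integral> xy. log 2 (pmf q xy /
                 (pmf (map_pmf fst q) (fst xy) * pmf (map_pmf snd q) (snd xy))) \<partial>measure_pmf q)"

text \<open>Markov chain A -> B -> C for a joint law of (A, B, C).\<close>
definition markov :: "('x \<times> 'y \<times> 'z) pmf \<Rightarrow> bool" where
  "markov q \<longleftrightarrow> (\<forall>a b c.
     pmf q (a, b, c) * pmf (map_pmf (\<lambda>(a, b, c). b) q) b =
     pmf (map_pmf (\<lambda>(a, b, c). (a, b)) q) (a, b) * pmf (map_pmf snd q) (b, c))"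

definition info_n :: "(nat \<Rightarrow> 'a list pmf) \<Rightarrow> ('a list \<Rightarrow> 'c pmf) \<Rightarrow> nat \<Rightarrow> real" where
  "info_n P Z n = minfo (chan_joint Z (P n))"

definition info_rate :: "(nat \<Rightarrow> 'a list pmf) \<Rightarrow> ('a list \<Rightarrow> 'c pmf) \<Rightarrow> ereal" where
  "info_rate P Z = liminf (\<lambda>n. ereal (info_n P Z n / real n))"

definition admissible :: "('a::finite list \<Rightarrow> 'b pmf) \<Rightarrow> ('a list \<Rightarrow> 'c pmf) \<Rightarrow> bool" where
  "admissible Z Zs \<longleftrightarrow>
   \<comment> \<open>(1)\<close>
   (\<exists>c>0. \<forall>P. is_process P \<longrightarrow> (\<forall>n\<ge>1. ent (bind_pmf (P n) Zs) \<le> ereal (c * real n))) \<and>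
   \<comment> \<open>(2)\<close>
   (\<forall>P. is_process P \<longrightarrow> info_rate P Z = info_rate P Zs) \<and>
   \<comment> \<open>(3)\<close>
   (\<forall>P m n. is_process P \<longrightarrow> 1 \<le> m \<longrightarrow> m \<le> n \<longrightarrow>
      (\<exists>q :: ('a list \<times> ('c \<times> 'c) \<times> 'c) pmf.
         map_pmf (\<lambda>(x, zz, z). (x, zz)) q = chan_joint2 Zs (take m) (drop m) (P n) \<and>
         map_pmf (\<lambda>(x, zz, z). (x, z)) q = chan_joint Zs (P n) \<and>
         markov q)) \<and>
   \<comment> \<open>(4a)\<close>
   (\<forall>\<tau>::nat. \<tau> \<ge> 1 \<longrightarrow> (\<exists>\<gamma> :: nat \<Rightarrow> real.
      mono \<gamma> \<and> \<gamma> \<in> o(\<lambda>m. real m) \<and> summable (\<lambda>m. \<gamma> m / (real m)^2) \<and>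
      (\<forall>P n. is_process P \<longrightarrow> n \<ge> \<tau> \<longrightarrow>
        (\<exists>q :: ('a list \<times> ('c \<times> nat) \<times> ('c \<times> 'c)) pmf.
           map_pmf (\<lambda>(x, (z, w), zz). (x, zz)) q = chan_joint2 Zs (take \<tau>) (drop \<tau>) (P n) \<and>
           map_pmf (\<lambda>(x, (z, w), zz). (x, z)) q = chan_joint Zs (P n) \<and>
           markov q \<and>
           ent (map_pmf (\<lambda>(x, (z, w), zz). w) q) \<le> ereal (\<gamma> n)) \<and>
        (\<exists>q :: ('a list \<times> ('c \<times> nat) \<times> ('c \<times> 'c)) pmf.
           map_pmf (\<lambda>(x, (z, w), zz). (x, zz)) q
             = chan_joint2 Zs (take (n - \<tau>)) (drop (n - \<tau>)) (P n) \<and>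
           map_pmf (\<lambda>(x, (z, w), zz). (x, z)) q = chan_joint Zs (P n) \<and>
           markov q \<and>
           ent (map_pmf (\<lambda>(x, (z, w), zz). w) q) \<le> ereal (\<gamma> n))))) \<and>
   \<comment> \<open>(4b)\<close>
   (\<exists>\<alpha> :: nat \<Rightarrow> real. \<alpha> \<in> o(\<lambda>m. real m) \<and>
      (\<forall>P b t. is_process P \<longrightarrow> b \<ge> 1 \<longrightarrow> t \<ge> 1 \<longrightarrow>
        (\<exists>q :: ('a list \<times> ('c \<times> nat) \<times> 'c list) pmf.
           map_pmf (\<lambda>(x, (z, w), zs). (x, zs)) q = chan_blocks Zs b t (P (t * b)) \<and>
           map_pmf (\<lambda>(x, (z, w), zs). (x, z)) q = chan_joint Zs (P (t * b)) \<and>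
           markov q \<and>
           ent (map_pmf (\<lambda>(x, (z, w), zs). w) q) \<le> ereal (real t * \<alpha> b)))) \<and>
   \<comment> \<open>(5)\<close>
   (\<exists>\<beta> :: nat \<Rightarrow> real. \<beta> \<in> o(\<lambda>m. real m) \<and>
      (\<forall>P b t. is_process P \<longrightarrow> b \<ge> 1 \<longrightarrow> t \<ge> 1 \<longrightarrow>
        (\<exists>(q :: ('a list \<times> 'c list \<times> nat) pmf) (\<phi> :: 'c list \<times> nat \<Rightarrow> 'c).
           map_pmf (\<lambda>(x, zs, y). (x, zs)) q = chan_blocks Zs b t (P (t * b)) \<and>
           map_pmf (\<lambda>(x, zs, y). (x, \<phi> (zs, y))) q = chan_joint Zs (P (t * b)) \<and>
           markov q \<and>
           (\<forall>z. finite {v \<in> set_pmf (map_pmf snd q). \<phi> v = z} \<and>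
                real (card {v \<in> set_pmf (map_pmf snd q). \<phi> v = z}) \<le> 2 powr (real t * \<beta> b)))))"

end

theory Submission
  imports Defs
begin

lemma marg_snd:
  "(\<integral>\<^sup>+ a. ennreal (pmf r (a, c)) \<partial>count_space UNIV) = ennreal (pmf (map_pmf snd r) c)"
proof -
  have bij: "bij_betw (\<lambda>a. (a, c)) UNIV (snd -` {c})"
    by (auto simp: bij_betw_def inj_on_def image_def)
  have "(\<integral>\<^sup>+ a. ennreal (pmf r (a, c)) \<partial>count_space UNIV)
      = (\<integral>\<^sup>+ x. ennreal (pmf r x) \<partial>count_space (snd -` {c}))"
    using nn_integral_bij_count_space[OF bij, of "\<lambda>x. ennreal (pmf r x)"] by simp
  also have "\<dots> = emeasure (measure_pmf r) (snd -` {c})" by (rule nn_integral_pmf)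
  also have "\<dots> = ennreal (pmf (map_pmf snd r) c)"
    by (simp add: pmf_map measure_pmf.emeasure_eq_measure)
  finally show ?thesis .
qed

lemma marg_fst:
  "(\<integral>\<^sup>+ b. ennreal (pmf r (a, b)) \<partial>count_space UNIV) = ennreal (pmf (map_pmf fst r) a)"
proof -
  have bij: "bij_betw (\<lambda>b. (a, b)) UNIV (fst -` {a})"
    by (auto simp: bij_betw_def inj_on_def image_def)
  have "(\<integral>\<^sup>+ b. ennreal (pmf r (a, b)) \<partial>count_space UNIV)
      = (\<integral>\<^sup>+ x. ennreal (pmf r x) \<partial>count_space (fst -` {a}))"
    using nn_integral_bij_count_space[OF bij, of "\<lambda>x. ennreal (pmf r x)"] by simp
  also have "\<dots> = emeasure (measure_pmf r) (fst -` {a})" by (rule nn_integral_pmf)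
  also have "\<dots> = ennreal (pmf (map_pmf fst r) a)"
    by (simp add: pmf_map measure_pmf.emeasure_eq_measure)
  finally show ?thesis .
qed

lemma sum_pmf_1: "(\<integral>\<^sup>+ x. ennreal (pmf p x) \<partial>count_space UNIV) = 1"
  by (simp add: nn_integral_pmf)

lemma prod_pmf_sum:
  "(\<integral>\<^sup>+ xy. ennreal (pmf p (fst xy) * pmf q (snd xy)) \<partial>count_space UNIV) = 1"
proof -
  have "(\<integral>\<^sup>+ xy. ennreal (pmf p (fst xy) * pmf q (snd xy)) \<partial>count_space UNIV)
     = (\<integral>\<^sup>+ x. \<integral>\<^sup>+ y. ennreal (pmf p x) * ennreal (pmf q y) \<partial>count_space UNIV \<partial>count_space UNIV)"
    by (subst nn_integral_fst_count_space[symmetric]) (simp add: ennreal_mult)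
  also have "\<dots> = (\<integral>\<^sup>+ x. ennreal (pmf p x) \<partial>count_space UNIV)"
    by (simp add: nn_integral_cmult sum_pmf_1)
  finally show ?thesis by (simp add: sum_pmf_1)
qed

lemma log_le_lin: "0 < t \<Longrightarrow> log 2 t \<le> (t - 1) / ln 2"
  using ln_le_minus_one[of t] by (simp add: log_def divide_right_mono)

lemma gibbs:
  fixes r :: "'x pmf" and s :: "'x \<Rightarrow> real"
  assumes s0: "\<And>x. 0 \<le> s x"
    and s1: "(\<integral>\<^sup>+ x. ennreal (s x) \<partial>count_space UNIV) \<le> 1"
    and spos: "\<And>x. x \<in> set_pmf r \<Longrightarrow> 0 < s x"
    and int: "integrable r (\<lambda>x. log 2 (s x / pmf r x))"
  shows "(\<integral>x. log 2 (s x / pmf r x) \<partial>r) \<le> 0"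
proof -
  let ?g = "\<lambda>x. s x / pmf r x"
  have nn: "(\<integral>\<^sup>+ x. ennreal (?g x) \<partial>r) \<le> 1"
  proof -
    have "(\<integral>\<^sup>+ x. ennreal (?g x) \<partial>r) = (\<integral>\<^sup>+ x. ennreal (pmf r x) * ennreal (?g x) \<partial>count_space UNIV)"
      by (rule nn_integral_measure_pmf)
    also have "\<dots> \<le> (\<integral>\<^sup>+ x. ennreal (s x) \<partial>count_space UNIV)"
      by (intro nn_integral_mono) (auto simp: ennreal_mult[symmetric] s0)
    finally show ?thesis using s1 by simp
  qed
  have gint: "integrable r ?g"
    by (rule integrableI_nonneg) (use nn s0 in \<open>auto simp: top.not_eq_extremum intro: le_less_trans\<close>)
  have gle: "(\<integral>x. ?g x \<partial>r) \<le> 1"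
  proof -
    have "(\<integral>x. ?g x \<partial>r) = enn2real (\<integral>\<^sup>+ x. ennreal (?g x) \<partial>r)"
      by (rule integral_eq_nn_integral) (auto simp: s0)
    also have "\<dots> \<le> enn2real 1" using nn by (intro enn2real_mono) auto
    finally show ?thesis by simp
  qed
  have "(\<integral>x. log 2 (?g x) \<partial>r) \<le> (\<integral>x. (?g x - 1) / ln 2 \<partial>r)"
  proof (rule integral_mono_AE[OF int])
    show "integrable r (\<lambda>x. (?g x - 1) / ln 2)" using gint by auto
    show "AE x in r. log 2 (?g x) \<le> (?g x - 1) / ln 2"
      using AE_measure_pmf[of r]
      by eventually_elim (rule log_le_lin, use spos in \<open>auto simp: set_pmf_iff pmf_nonneg\<close>)
  qed
  also have "\<dots> = ((\<integral>x. ?g x \<partial>r) - 1) / ln 2"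
    using gint by (simp add: integral_diff)
  also have "\<dots> \<le> 0" using gle by (simp add: divide_nonpos_pos)
  finally show ?thesis .
qed


lemma ratio_integrable:
  fixes r :: "'x pmf" and s :: "'x \<Rightarrow> real"
  assumes s0: "\<And>x. 0 \<le> s x"
    and s1: "(\<integral>\<^sup>+ x. ennreal (s x) \<partial>count_space UNIV) \<le> 1"
  shows "integrable r (\<lambda>x. s x / pmf r x)"
proof -
  let ?g = "\<lambda>x. s x / pmf r x"
  have nn: "(\<integral>\<^sup>+ x. ennreal (?g x) \<partial>r) \<le> 1"
  proof -
    have "(\<integral>\<^sup>+ x. ennreal (?g x) \<partial>r) = (\<integral>\<^sup>+ x. ennreal (pmf r x) * ennreal (?g x) \<partial>count_space UNIV)"
      by (rule nn_integral_measure_pmf)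
    also have "\<dots> \<le> (\<integral>\<^sup>+ x. ennreal (s x) \<partial>count_space UNIV)"
      by (intro nn_integral_mono) (auto simp: ennreal_mult[symmetric] s0)
    finally show ?thesis using s1 by simp
  qed
  show ?thesis
    by (rule integrableI_nonneg) (use nn s0 in \<open>auto simp: top.not_eq_extremum intro: le_less_trans\<close>)
qed

definition mi_fun :: "('x \<times> 'y) pmf \<Rightarrow> 'x \<times> 'y \<Rightarrow> real" where
  "mi_fun q xy = log 2 (pmf q xy / (pmf (map_pmf fst q) (fst xy) * pmf (map_pmf snd q) (snd xy)))"

lemma minfo_mi: "minfo q = (\<integral>xy. mi_fun q xy \<partial>q)"
  by (simp add: minfo_def mi_fun_def)

lemma pmf_le_snd: "pmf r (x, y) \<le> pmf (map_pmf snd r) y"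
proof -
  have "pmf r (x, y) = measure r {(x, y)}" by (simp add: measure_pmf_single)
  also have "\<dots> \<le> measure r (snd -` {y})" by (rule measure_pmf.finite_measure_mono) auto
  finally show ?thesis by (simp add: pmf_map)
qed

lemma pmf_le_fst: "pmf r (x, y) \<le> pmf (map_pmf fst r) x"
proof -
  have "pmf r (x, y) = measure r {(x, y)}" by (simp add: measure_pmf_single)
  also have "\<dots> \<le> measure r (fst -` {x})" by (rule measure_pmf.finite_measure_mono) auto
  finally show ?thesis by (simp add: pmf_map)
qed

lemma pos_marg:
  assumes "xy \<in> set_pmf r"
  shows "0 < pmf (map_pmf fst r) (fst xy)" "0 < pmf (map_pmf snd r) (snd xy)" "0 < pmf r xy"
proof -
  have h1: "fst xy \<in> set_pmf (map_pmf fst r)" and h2: "snd xy \<in> set_pmf (map_pmf snd r)"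
    using assms by auto
  show "0 < pmf (map_pmf fst r) (fst xy)" by (rule pmf_positive[OF h1])
  show "0 < pmf (map_pmf snd r) (snd xy)" by (rule pmf_positive[OF h2])
  show "0 < pmf r xy" using assms by (auto intro: pmf_positive)
qed

lemma mi_integrable:
  fixes r :: "('x \<times> 'y) pmf"
  assumes fin: "finite (set_pmf (map_pmf fst r))"
  shows "integrable r (mi_fun r)"
proof -
  let ?p1 = "pmf (map_pmf fst r)" and ?p2 = "pmf (map_pmf snd r)"
  define S where "S = set_pmf (map_pmf fst r)"
  define C where "C = (\<Sum>x\<in>S. - log 2 (?p1 x))"
  have termnn: "\<And>x. 0 \<le> - log 2 (?p1 x)"
  proof -
    fix x
    have "?p1 x \<le> 1" by (rule pmf_le_1)
    then show "0 \<le> - log 2 (?p1 x)"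
      by (cases "?p1 x = 0") (auto simp: pmf_nonneg order_less_le log_def ln_le_zero_iff intro!: divide_nonpos_pos)
  qed
  have termnn': "\<And>x. log 2 (?p1 x) \<le> 0" using termnn by (simp add: le_minus_iff)
  have Cge: "\<And>x. x \<in> S \<Longrightarrow> - log 2 (?p1 x) \<le> C"
    unfolding C_def using fin S_def by (intro member_le_sum) (auto simp: termnn')
  have C0: "0 \<le> C" unfolding C_def by (intro sum_nonneg termnn)
  let ?s = "\<lambda>xy. ?p1 (fst xy) * ?p2 (snd xy)"
  have s1: "(\<integral>\<^sup>+ xy. ennreal (?s xy) \<partial>count_space UNIV) \<le> 1"
    by (simp add: prod_pmf_sum)
  have gi: "integrable r (\<lambda>xy. ?s xy / pmf r xy)"
    by (rule ratio_integrable[OF _ s1]) auto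
  have Bi: "integrable r (\<lambda>xy. C + (?s xy / pmf r xy) / ln 2)"
    by (intro Bochner_Integration.integrable_add measure_pmf.integrable_const integrable_divide gi)
  show ?thesis
  proof (rule Bochner_Integration.integrable_bound[OF Bi])
    show "mi_fun r \<in> borel_measurable (measure_pmf r)" by simp
    show "AE xy in r. norm (mi_fun r xy) \<le> norm (C + (?s xy / pmf r xy) / ln 2)"
      using AE_measure_pmf[of r]
    proof eventually_elim
      case (elim xy)
      obtain x y where xy: "xy = (x, y)" by (cases xy)
      have a: "0 < ?p1 x" "0 < ?p2 y" "0 < pmf r (x, y)"
        using pos_marg[OF elim] xy by auto
      define t where "t = pmf r (x, y) / (?p1 x * ?p2 y)"
      have t0: "0 < t" using a by (simp add: t_def)
      have "t \<le> 1 / ?p1 x"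
        using a pmf_le_snd[of r x y] by (simp add: t_def field_simps)
      then have "log 2 t \<le> log 2 (1 / ?p1 x)" using t0 by (intro log_mono) auto
      also have "\<dots> = - log 2 (?p1 x)" using a by (simp add: log_divide)
      also have "\<dots> \<le> C" using Cge[of x] elim xy S_def by (force simp: image_iff)
      finally have up: "log 2 t \<le> C" .
      have "- log 2 t = log 2 (1 / t)" using t0 by (simp add: log_divide)
      also have "\<dots> \<le> (1 / t - 1) / ln 2" using t0 by (intro log_le_lin) auto
      also have "\<dots> \<le> (1 / t) / ln 2" by (intro divide_right_mono) auto
      finally have lo: "- log 2 t \<le> (1 / t) / ln 2" .
      have st: "?s xy / pmf r xy = 1 / t" using a xy by (simp add: t_def)
      have "0 \<le> (1/t) / ln 2" using t0 by simp
      then have "\<bar>log 2 t\<bar> \<le> C + (1 / t) / ln 2" using up lo C0 by linarith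
      then show ?case using C0 t0 st \<open>0 \<le> (1/t) / ln 2\<close>
        by (simp add: mi_fun_def xy t_def)
    qed
  qed
qed

lemma mi_nonneg:
  fixes r :: "('x \<times> 'y) pmf"
  assumes int: "integrable r (mi_fun r)"
  shows "0 \<le> minfo r"
proof -
  let ?p1 = "pmf (map_pmf fst r)" and ?p2 = "pmf (map_pmf snd r)"
  let ?s = "\<lambda>xy. ?p1 (fst xy) * ?p2 (snd xy)"
  have eq: "AE xy in r. log 2 (?s xy / pmf r xy) = - mi_fun r xy"
    using AE_measure_pmf[of r]
  proof eventually_elim
    case (elim xy)
    note a = pos_marg[OF elim]
    then show ?case by (simp add: mi_fun_def log_divide)
  qed
  have int2: "integrable r (\<lambda>xy. log 2 (?s xy / pmf r xy))"
    using integrable_cong_AE[OF _ _ eq] int by simp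
  have "(\<integral>xy. log 2 (?s xy / pmf r xy) \<partial>r) \<le> 0"
  proof (rule gibbs[OF _ _ _ int2])
    show "(\<integral>\<^sup>+ xy. ennreal (?s xy) \<partial>count_space UNIV) \<le> 1" by (simp add: prod_pmf_sum)
    fix xy assume "xy \<in> set_pmf r"
    from pos_marg[OF this] show "0 < ?s xy" by simp
  qed auto
  moreover have "(\<integral>xy. log 2 (?s xy / pmf r xy) \<partial>r) = - minfo r"
    unfolding minfo_mi by (subst integral_cong_AE[OF _ _ eq]) auto
  ultimately show ?thesis by simp
qed

lemma ent_bound:
  fixes r :: "('x \<times> 'y) pmf"
  assumes fin: "finite (set_pmf (map_pmf fst r))"
  shows "minfo r \<le> log 2 (card (set_pmf (map_pmf fst r)))"
proof -
  define p1 where "p1 = map_pmf fst r"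
  define S where "S = set_pmf p1"
  have finS: "finite S" using fin by (simp add: S_def p1_def)
  have Sne: "S \<noteq> {}" by (simp add: S_def set_pmf_not_empty)
  have cS: "0 < card S" using finS Sne by (simp add: card_gt_0_iff)
  have int1: "integrable r (mi_fun r)" by (rule mi_integrable[OF fin])
  have int2: "integrable r (\<lambda>xy. - log 2 (pmf p1 (fst xy)))"
  proof -
    have "integrable p1 (\<lambda>x. - log 2 (pmf p1 x))"
      using finS by (intro integrable_measure_pmf_finite) (simp add: S_def)
    then show ?thesis by (simp add: p1_def)
  qed
  have "minfo r \<le> (\<integral>xy. - log 2 (pmf p1 (fst xy)) \<partial>r)"
    unfolding minfo_mi
  proof (rule integral_mono_AE[OF int1 int2])
    show "AE xy in r. mi_fun r xy \<le> - log 2 (pmf p1 (fst xy))"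
      using AE_measure_pmf[of r]
    proof eventually_elim
      case (elim xy)
      obtain x y where xy: "xy = (x, y)" by (cases xy)
      have a: "0 < pmf p1 x" "0 < pmf (map_pmf snd r) y" "0 < pmf r (x, y)"
        using pos_marg[OF elim] xy by (auto simp: p1_def)
      define t where "t = pmf r (x, y) / (pmf p1 x * pmf (map_pmf snd r) y)"
      have t0: "0 < t" using a by (simp add: t_def)
      have "t \<le> 1 / pmf p1 x"
        using a pmf_le_snd[of r x y] by (simp add: t_def field_simps)
      then have "log 2 t \<le> log 2 (1 / pmf p1 x)" using t0 by (intro log_mono) auto
      also have "\<dots> = - log 2 (pmf p1 x)" using a by (simp add: log_divide)
      finally show ?case by (simp add: mi_fun_def xy t_def p1_def)
    qed
  qed
  also have "\<dots> = (\<integral>x. - log 2 (pmf p1 x) \<partial>p1)" by (simp add: p1_def)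
  also have "\<dots> \<le> log 2 (card S)"
  proof -
    define s where "s = (\<lambda>x. indicator S x / real (card S))"
    have s1: "(\<integral>\<^sup>+ x. ennreal (s x) \<partial>count_space UNIV) \<le> 1"
    proof -
      have "(\<integral>\<^sup>+ x. ennreal (s x) \<partial>count_space UNIV)
          = (\<integral>\<^sup>+ x. ennreal (1 / real (card S)) * indicator S x \<partial>count_space UNIV)"
        by (intro nn_integral_cong) (auto simp: s_def split: split_indicator)
      also have "\<dots> = ennreal (1 / real (card S)) * emeasure (count_space UNIV) S"
        by (rule nn_integral_cmult_indicator) simp
      also have "\<dots> = 1" using finS cS Sne
        by (simp add: ennreal_of_nat_eq_real_of_nat ennreal_mult[symmetric])
      finally show ?thesis by simp
    qed
    have eq: "AE x in p1. log 2 (s x / pmf p1 x) = - log 2 (card S) - log 2 (pmf p1 x)"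
      using AE_measure_pmf[of p1]
    proof eventually_elim
      case (elim x)
      have "0 < pmf p1 x" using elim by (rule pmf_positive)
      then show ?case using elim cS by (simp add: s_def S_def log_divide log_mult)
    qed
    have intp: "integrable p1 (\<lambda>x. - log 2 (card S) - log 2 (pmf p1 x))"
      using finS by (intro integrable_measure_pmf_finite) (simp add: S_def)
    have int3: "integrable p1 (\<lambda>x. log 2 (s x / pmf p1 x))"
      using integrable_cong_AE[OF _ _ eq] intp by simp
    have "(\<integral>x. log 2 (s x / pmf p1 x) \<partial>p1) \<le> 0"
      by (rule gibbs[OF _ s1 _ int3]) (use cS in \<open>auto simp: s_def S_def\<close>)
    moreover have "(\<integral>x. log 2 (s x / pmf p1 x) \<partial>p1) = (\<integral>x. - log 2 (card S) - log 2 (pmf p1 x) \<partial>p1)"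
      by (rule integral_cong_AE[OF _ _ eq]) auto
    moreover have "(\<integral>x. - log 2 (card S) - log 2 (pmf p1 x) \<partial>p1)
        = - log 2 (card S) + (\<integral>x. - log 2 (pmf p1 x) \<partial>p1)"
      using finS by (subst Bochner_Integration.integral_diff)
        (auto intro!: integrable_measure_pmf_finite simp: S_def)
    ultimately show ?thesis by simp
  qed
  finally show ?thesis by (simp add: S_def p1_def)
qed

lemma pmf_Pair_map: "pmf (map_pmf (Pair y) M) (x, z) = (if x = y then pmf M z else 0)"
proof (cases "x = y")
  case True then show ?thesis using pmf_map_inj'[of "Pair y" M z] by (simp add: inj_on_def)
next
  case False
  then have "(x, z) \<notin> set_pmf (map_pmf (Pair y) M)" by auto
  then show ?thesis using False by (simp add: pmf_eq_0_set_pmf)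
qed

lemma pmf_chan_joint: "pmf (chan_joint K p) (x, z) = pmf p x * pmf (K x) z"
proof -
  have "pmf (chan_joint K p) (x, z) = (\<integral>y. pmf (map_pmf (Pair y) (K y)) (x, z) \<partial>p)"
    by (simp add: chan_joint_def pmf_bind)
  also have "\<dots> = (\<Sum>a\<in>{x}. pmf (map_pmf (Pair a) (K a)) (x, z) * pmf p a)"
    by (rule integral_measure_pmf_real) (auto simp: pmf_Pair_map split: if_splits)
  finally show ?thesis by (simp add: pmf_Pair_map)
qed

lemma chan_joint_fst: "map_pmf fst (chan_joint K p) = p"
  by (simp add: chan_joint_def map_bind_pmf map_pmf_comp bind_return_pmf')

lemma chan_joint_snd: "map_pmf snd (chan_joint K p) = bind_pmf p K"
  by (simp add: chan_joint_def map_bind_pmf map_pmf_comp)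

lemma chan_joint2_eq:
  "chan_joint2 K f g p = chan_joint (\<lambda>x. pair_pmf (K (f x)) (K (g x))) p"
  by (simp add: chan_joint2_def chan_joint_def pair_pmf_def map_pmf_def bind_assoc_pmf bind_return_pmf)

lemma dpi:
  fixes q :: "('x \<times> 'y \<times> 'z) pmf"
  assumes mk: "markov q" and fin: "finite (set_pmf (map_pmf fst q))"
  shows "minfo (map_pmf (\<lambda>(a, b, c). (a, c)) q) \<le> minfo (map_pmf (\<lambda>(a, b, c). (a, b)) q)"
proof -
  define qab where "qab = map_pmf (\<lambda>(a, b, c). (a, b)) q"
  define qac where "qac = map_pmf (\<lambda>(a, b, c). (a, c)) q"
  define qbc where "qbc = map_pmf snd q"
  define pa where "pa = map_pmf fst q"
  define pb where "pb = map_pmf (\<lambda>(a, b, c). b) q"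
  define pc where "pc = map_pmf (\<lambda>(a, b, c). c) q"
  have e1: "(\<lambda>(a::'x, b::'y, c::'z). b) = (\<lambda>x. fst (snd x))" "(\<lambda>(a::'x, b::'y, c::'z). c) = (\<lambda>x. snd (snd x))"
    by (auto simp: fun_eq_iff)
  have m1: "map_pmf fst qab = pa" "map_pmf snd qab = pb" "map_pmf fst qac = pa"
    "map_pmf snd qac = pc" "map_pmf snd qbc = pc"
    by (simp_all add: qab_def qac_def pa_def pb_def pc_def qbc_def map_pmf_comp split_beta e1)
  have mk': "\<And>a b c. pmf q (a, b, c) * pmf pb b = pmf qab (a, b) * pmf qbc (b, c)"
    using mk by (simp add: markov_def pb_def qab_def qbc_def)
  have finab: "finite (set_pmf (map_pmf fst qab))" "finite (set_pmf (map_pmf fst qac))"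
    using fin by (simp_all add: m1 pa_def)
  have iab: "integrable q (\<lambda>x. mi_fun qab (case x of (a, b, c) \<Rightarrow> (a, b)))"
    using mi_integrable[OF finab(1)] by (simp add: qab_def)
  have iac: "integrable q (\<lambda>x. mi_fun qac (case x of (a, b, c) \<Rightarrow> (a, c)))"
    using mi_integrable[OF finab(2)] by (simp add: qac_def)
  define s where "s = (\<lambda>(a, b, c). pmf qac (a, c) * pmf qbc (b, c) / pmf pc c)"
  have eq: "AE x in q. log 2 (s x / pmf q x) =
      mi_fun qac (case x of (a, b, c) \<Rightarrow> (a, c)) - mi_fun qab (case x of (a, b, c) \<Rightarrow> (a, b))"
    using AE_measure_pmf[of q]
  proof eventually_elim
    case (elim x)
    obtain a b c where x: "x = (a, b, c)" by (cases x)
    have in1: "(a, b) \<in> set_pmf qab" "(a, c) \<in> set_pmf qac" "(b, c) \<in> set_pmf qbc"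
      "a \<in> set_pmf pa" "b \<in> set_pmf pb" "c \<in> set_pmf pc"
      using elim x by (force simp: qab_def qac_def qbc_def pa_def pb_def pc_def)+
    have p: "0 < pmf qab (a, b)" "0 < pmf qac (a, c)" "0 < pmf qbc (b, c)"
      "0 < pmf pa a" "0 < pmf pb b" "0 < pmf pc c" "0 < pmf q (a, b, c)"
      using in1 elim x by (auto intro: pmf_positive)
    have qv: "pmf q (a, b, c) = pmf qab (a, b) * pmf qbc (b, c) / pmf pb b"
      using mk'[of a b c] p by (simp add: field_simps)
    have "s x / pmf q x = (pmf qac (a, c) / (pmf pa a * pmf pc c)) / (pmf qab (a, b) / (pmf pa a * pmf pb b))"
      using p by (simp add: s_def x qv field_simps)
    then show ?case using p
      by (simp add: x mi_fun_def m1 log_divide log_mult)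
  qed
  have ilog: "integrable q (\<lambda>x. log 2 (s x / pmf q x))"
    using integrable_cong_AE[OF _ _ eq] iac iab by simp
  have s0: "\<And>x. 0 \<le> s x" by (auto simp: s_def)
  have s1: "(\<integral>\<^sup>+ x. ennreal (s x) \<partial>count_space UNIV) \<le> 1"
  proof -
    have "(\<integral>\<^sup>+ x. ennreal (s x) \<partial>count_space UNIV)
        = (\<integral>\<^sup>+ bc. \<integral>\<^sup>+ a. ennreal (s (a, bc)) \<partial>count_space UNIV \<partial>count_space UNIV)"
      by (rule nn_integral_snd_count_space[symmetric])
    also have "\<dots> \<le> (\<integral>\<^sup>+ bc. ennreal (pmf qbc bc) \<partial>count_space UNIV)"
    proof (intro nn_integral_mono)
      fix bc :: "'y \<times> 'z"
      obtain b c where bc: "bc = (b, c)" by (cases bc)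
      have "(\<integral>\<^sup>+ a. ennreal (s (a, bc)) \<partial>count_space UNIV)
          = (\<integral>\<^sup>+ a. ennreal (pmf qbc (b, c) / pmf pc c) * ennreal (pmf qac (a, c)) \<partial>count_space UNIV)"
        by (intro nn_integral_cong) (simp add: s_def bc ennreal_mult[symmetric] mult.commute)
      also have "\<dots> = ennreal (pmf qbc (b, c) / pmf pc c) * ennreal (pmf pc c)"
        by (simp add: nn_integral_cmult marg_snd m1)
      also have "\<dots> = ennreal (pmf qbc (b, c) / pmf pc c * pmf pc c)"
        by (subst ennreal_mult) auto
      also have "\<dots> \<le> ennreal (pmf qbc (b, c))"
      proof (cases "pmf pc c = 0")
        case True then show ?thesis by simp
      next
        case False then show ?thesis by simp
      qed
      finally show "(\<integral>\<^sup>+ a. ennreal (s (a, bc)) \<partial>count_space UNIV) \<le> ennreal (pmf qbc bc)"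
        by (simp add: bc)
    qed
    also have "\<dots> = 1" by (rule sum_pmf_1)
    finally show ?thesis .
  qed
  have spos: "\<And>x. x \<in> set_pmf q \<Longrightarrow> 0 < s x"
  proof -
    fix x assume elim: "x \<in> set_pmf q"
    obtain a b c where x: "x = (a, b, c)" by (cases x)
    have in1: "(a, c) \<in> set_pmf qac" "(b, c) \<in> set_pmf qbc" "c \<in> set_pmf pc"
      using elim x by (force simp: qac_def qbc_def pc_def)+
    then show "0 < s x" by (auto simp: s_def x intro!: pmf_positive divide_pos_pos mult_pos_pos)
  qed
  have "(\<integral>x. log 2 (s x / pmf q x) \<partial>q) \<le> 0"
    by (rule gibbs[OF s0 s1 spos ilog])
  moreover have "(\<integral>x. log 2 (s x / pmf q x) \<partial>q) = minfo qac - minfo qab"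
  proof -
    have "(\<integral>x. log 2 (s x / pmf q x) \<partial>q) = (\<integral>x. mi_fun qac (case x of (a, b, c) \<Rightarrow> (a, c)) - mi_fun qab (case x of (a, b, c) \<Rightarrow> (a, b)) \<partial>q)"
      by (rule integral_cong_AE[OF _ _ eq]) auto
    also have "\<dots> = (\<integral>x. mi_fun qac (case x of (a, b, c) \<Rightarrow> (a, c)) \<partial>q) - (\<integral>x. mi_fun qab (case x of (a, b, c) \<Rightarrow> (a, b)) \<partial>q)"
      by (rule Bochner_Integration.integral_diff[OF iac iab])
    also have "\<dots> = minfo qac - minfo qab"
      by (simp add: minfo_mi qac_def qab_def)
    finally show ?thesis .
  qed
  ultimately show ?thesis by (simp add: qac_def qab_def)
qed

lemma map_pair_fst_aux: "map_pmf (\<lambda>y. (u, fst y)) (pair_pmf M N) = map_pmf (Pair u) M"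
  using map_pmf_comp[of "Pair u" fst "pair_pmf M N", symmetric] by (simp add: map_fst_pair_pmf)

lemma map_pair_snd_aux: "map_pmf (\<lambda>y. (u, snd y)) (pair_pmf M N) = map_pmf (Pair u) N"
  using map_pmf_comp[of "Pair u" snd "pair_pmf M N", symmetric] by (simp add: map_snd_pair_pmf)

lemma split_bound:
  fixes p :: "'a list pmf" and K :: "'a list \<Rightarrow> 'c pmf"
  assumes fin: "finite (set_pmf p)"
  shows "minfo (chan_joint2 K f g p) \<le> minfo (chan_joint K (map_pmf f p)) + minfo (chan_joint K (map_pmf g p))"
proof -
  define KK where "KK = (\<lambda>x. pair_pmf (K (f x)) (K (g x)))"
  define q0 where "q0 = chan_joint KK p"
  define A where "A = chan_joint K (map_pmf f p)"
  define B where "B = chan_joint K (map_pmf g p)"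
  define W where "W = map_pmf snd q0"
  define hA where "hA = (\<lambda>(x :: 'a list, (z1 :: 'c, z2 :: 'c)). (f x, z1))"
  define hB where "hB = (\<lambda>(x :: 'a list, (z1 :: 'c, z2 :: 'c)). (g x, z2))"
  have q0eq: "chan_joint2 K f g p = q0" by (simp add: q0_def KK_def chan_joint2_eq)
  have hA_eq: "map_pmf hA q0 = A"
    by (simp add: hA_def A_def q0_def KK_def chan_joint_def map_bind_pmf bind_map_pmf map_pmf_comp split_beta map_pair_fst_aux)
  have hB_eq: "map_pmf hB q0 = B"
    by (simp add: hB_def B_def q0_def KK_def chan_joint_def map_bind_pmf bind_map_pmf map_pmf_comp split_beta map_pair_snd_aux)
  have Wfst: "map_pmf fst W = map_pmf snd A"
    by (simp add: W_def q0_def A_def chan_joint_snd KK_def map_bind_pmf map_fst_pair_pmf bind_map_pmf)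
  have Wsnd: "map_pmf snd W = map_pmf snd B"
    by (simp add: W_def q0_def B_def chan_joint_snd KK_def map_bind_pmf map_snd_pair_pmf bind_map_pmf)
  have q0fst: "map_pmf fst q0 = p" by (simp add: q0_def chan_joint_fst)
  have Afst: "map_pmf fst A = map_pmf f p" by (simp add: A_def chan_joint_fst)
  have Bfst: "map_pmf fst B = map_pmf g p" by (simp add: B_def chan_joint_fst)
  have i0: "integrable q0 (mi_fun q0)" by (rule mi_integrable) (simp add: q0fst fin)
  have iA: "integrable q0 (\<lambda>e. mi_fun A (hA e))"
  proof -
    have "integrable A (mi_fun A)" by (rule mi_integrable) (simp add: Afst fin)
    then show ?thesis by (simp add: hA_eq[symmetric])
  qed
  have iB: "integrable q0 (\<lambda>e. mi_fun B (hB e))"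
  proof -
    have "integrable B (mi_fun B)" by (rule mi_integrable) (simp add: Bfst fin)
    then show ?thesis by (simp add: hB_eq[symmetric])
  qed
  have eq: "AE e in q0. mi_fun W (snd e) = mi_fun A (hA e) + mi_fun B (hB e) - mi_fun q0 e"
    using AE_measure_pmf[of q0]
  proof eventually_elim
    case (elim e)
    obtain x z1 z2 where e: "e = (x, (z1, z2))" by (cases e) auto
    have pq: "pmf q0 e = pmf p x * (pmf (K (f x)) z1 * pmf (K (g x)) z2)"
      by (simp add: q0_def e pmf_chan_joint KK_def pmf_pair)
    have pA: "pmf A (f x, z1) = pmf (map_pmf f p) (f x) * pmf (K (f x)) z1"
      by (simp add: A_def pmf_chan_joint)
    have pB: "pmf B (g x, z2) = pmf (map_pmf g p) (g x) * pmf (K (g x)) z2"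
      by (simp add: B_def pmf_chan_joint)
    have "pmf q0 e \<noteq> 0" using elim by (simp add: set_pmf_iff)
    then have k: "0 < pmf p x" "0 < pmf (K (f x)) z1" "0 < pmf (K (g x)) z2"
      using pq by (auto simp: order_less_le)
    have s1: "f x \<in> set_pmf (map_pmf f p)" "g x \<in> set_pmf (map_pmf g p)"
      using k(1) by (auto simp: set_pmf_iff)
    have s2: "(f x, z1) \<in> set_pmf A" "(g x, z2) \<in> set_pmf B" "(z1, z2) \<in> set_pmf W"
      using elim by (force simp: hA_eq[symmetric] hB_eq[symmetric] W_def hA_def hB_def e)+
    have s3: "z1 \<in> set_pmf (map_pmf snd A)" "z2 \<in> set_pmf (map_pmf snd B)"
      using s2 by force+
    have ps: "0 < pmf (map_pmf f p) (f x)" "0 < pmf (map_pmf g p) (g x)" "0 < pmf W (z1, z2)"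
      "0 < pmf (map_pmf snd A) z1" "0 < pmf (map_pmf snd B) z2"
      using pmf_positive[OF s1(1)] pmf_positive[OF s1(2)] pmf_positive[OF s2(3)]
        pmf_positive[OF s3(1)] pmf_positive[OF s3(2)] by auto
    let ?W = "pmf W (z1, z2)" and ?Z1 = "pmf (map_pmf snd A) z1" and ?Z2 = "pmf (map_pmf snd B) z2"
    let ?K1 = "pmf (K (f x)) z1" and ?K2 = "pmf (K (g x)) z2"
    have pq': "pmf q0 (x, z1, z2) = pmf p x * (?K1 * ?K2)" using pq e by simp
    have m0: "mi_fun q0 e = log 2 (?K1 * ?K2 / ?W)"
      using k ps by (simp add: mi_fun_def e pq' q0fst W_def[symmetric])
    have mA: "mi_fun A (hA e) = log 2 (?K1 / ?Z1)"
      using k ps by (simp add: mi_fun_def e hA_def pA Afst)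
    have mB: "mi_fun B (hB e) = log 2 (?K2 / ?Z2)"
      using k ps by (simp add: mi_fun_def e hB_def pB Bfst)
    have mW: "mi_fun W (snd e) = log 2 (?W / (?Z1 * ?Z2))"
      by (simp add: mi_fun_def e Wfst Wsnd)
    show ?case using k ps unfolding m0 mA mB mW
      by (simp add: log_divide log_mult)
  qed
  have iW': "integrable q0 (\<lambda>e. mi_fun W (snd e))"
    using integrable_cong_AE[OF _ _ eq] iA iB i0 by simp
  have iW: "integrable W (mi_fun W)" using iW' by (simp add: W_def)
  have W0: "0 \<le> minfo W" by (rule mi_nonneg[OF iW])
  have "minfo W = (\<integral>e. mi_fun A (hA e) + mi_fun B (hB e) - mi_fun q0 e \<partial>q0)"
    unfolding minfo_mi W_def integral_map_pmf
    by (rule integral_cong_AE[OF _ _ eq[unfolded W_def]]) auto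
  also have "\<dots> = (\<integral>e. mi_fun A (hA e) \<partial>q0) + (\<integral>e. mi_fun B (hB e) \<partial>q0) - (\<integral>e. mi_fun q0 e \<partial>q0)"
    using iA iB i0 by simp
  also have "\<dots> = minfo A + minfo B - minfo q0"
    by (simp add: minfo_mi hA_eq[symmetric] hB_eq[symmetric])
  finally show ?thesis using W0 q0eq A_def B_def by simp
qed

lemma lists_fin: "finite {xs :: ('a::finite) list. length xs = k}"
  using finite_lists_length_eq[of "UNIV :: 'a set" k] by simp

lemma lists_card: "card {xs :: ('a::finite) list. length xs = k} = CARD('a) ^ k"
  using card_lists_length_eq[of "UNIV :: 'a set" k] by simp

lemma mi_len_bound:
  fixes p :: "('a::finite) list pmf" and K :: "'a list \<Rightarrow> 'c pmf"
  assumes len: "\<And>x. x \<in> set_pmf p \<Longrightarrow> length x = k"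
  shows "minfo (chan_joint K p) \<le> real k * log 2 (real CARD('a))"
proof -
  have sub: "set_pmf p \<subseteq> {xs :: 'a list. length xs = k}" using len by auto
  have fin: "finite (set_pmf p)" using finite_subset[OF sub lists_fin] .
  have cpos: "0 < card (set_pmf p)" using fin by (simp add: card_gt_0_iff set_pmf_not_empty)
  have "minfo (chan_joint K p) \<le> log 2 (card (set_pmf p))"
    using ent_bound[of "chan_joint K p"] fin by (simp add: chan_joint_fst)
  also have "\<dots> \<le> log 2 (real (CARD('a) ^ k))"
  proof -
    have "card (set_pmf p) \<le> CARD('a) ^ k"
      using card_mono[OF lists_fin sub] by (simp add: lists_card)
    then show ?thesis using cpos by (intro log_mono) auto
  qed
  also have "\<dots> = real k * log 2 (real CARD('a))" by (simp add: log_nat_power)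
  finally show ?thesis .
qed

lemma proc_len: "is_process P \<Longrightarrow> x \<in> set_pmf (P n) \<Longrightarrow> length x = n"
  by (simp add: is_process_def)

lemma proc_fin: "is_process (P :: nat \<Rightarrow> ('a::finite) list pmf) \<Longrightarrow> finite (set_pmf (P n))"
  using finite_subset[OF _ lists_fin[of n]] proc_len[of P] by blast

lemma proc_take: "is_process P \<Longrightarrow> m \<le> n \<Longrightarrow> map_pmf (take m) (P n) = P m"
  by (simp add: is_process_def)

lemma info_nonneg:
  assumes "is_process (P :: nat \<Rightarrow> ('a::finite) list pmf)"
  shows "0 \<le> info_n P K n"
  unfolding info_n_def
  by (rule mi_nonneg, rule mi_integrable) (simp add: chan_joint_fst proc_fin[OF assms])

lemma info_le:
  assumes "is_process (P :: nat \<Rightarrow> ('a::finite) list pmf)"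
  shows "info_n P K n \<le> real n * log 2 (real CARD('a))"
  unfolding info_n_def by (rule mi_len_bound) (use proc_len[OF assms] in auto)

lemma chain_bound:
  fixes P :: "nat \<Rightarrow> ('a::finite) list pmf" and Zs :: "'a list \<Rightarrow> 'c pmf"
  assumes pr: "is_process P"
    and A3: "\<forall>P m n. is_process P \<longrightarrow> 1 \<le> m \<longrightarrow> m \<le> n \<longrightarrow>
      (\<exists>q :: ('a list \<times> ('c \<times> 'c) \<times> 'c) pmf.
         map_pmf (\<lambda>(x, zz, z). (x, zz)) q = chan_joint2 Zs (take m) (drop m) (P n) \<and>
         map_pmf (\<lambda>(x, zz, z). (x, z)) q = chan_joint Zs (P n) \<and>
         markov q)"
    and m: "1 \<le> m" "m \<le> N"
  shows "info_n P Zs N \<le> info_n P Zs m + minfo (chan_joint Zs (map_pmf (drop m) (P N)))"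
proof -
  obtain q :: "('a list \<times> ('c \<times> 'c) \<times> 'c) pmf" where
    q1: "map_pmf (\<lambda>(x, zz, z). (x, zz)) q = chan_joint2 Zs (take m) (drop m) (P N)" and
    q2: "map_pmf (\<lambda>(x, zz, z). (x, z)) q = chan_joint Zs (P N)" and
    mk: "markov q"
    using A3 pr m by blast
  have "map_pmf fst q = map_pmf fst (map_pmf (\<lambda>(x, zz, z). (x, z)) q)"
    by (simp add: map_pmf_comp split_beta)
  also have "\<dots> = P N" by (simp add: q2 chan_joint_fst)
  finally have fq: "finite (set_pmf (map_pmf fst q))" using proc_fin[OF pr] by simp
  have "info_n P Zs N = minfo (map_pmf (\<lambda>(x, zz, z). (x, z)) q)" by (simp add: info_n_def q2)
  also have "\<dots> \<le> minfo (map_pmf (\<lambda>(x, zz, z). (x, zz)) q)" by (rule dpi[OF mk fq])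
  also have "\<dots> = minfo (chan_joint2 Zs (take m) (drop m) (P N))" by (simp add: q1)
  also have "\<dots> \<le> minfo (chan_joint Zs (map_pmf (take m) (P N))) + minfo (chan_joint Zs (map_pmf (drop m) (P N)))"
    by (rule split_bound[OF proc_fin[OF pr]])
  also have "map_pmf (take m) (P N) = P m" by (rule proc_take[OF pr m(2)])
  finally show ?thesis by (simp add: info_n_def)
qed

lemma drop_bound:
  fixes P :: "nat \<Rightarrow> ('a::finite) list pmf"
  assumes pr: "is_process P"
  shows "minfo (chan_joint K (map_pmf (drop m) (P N))) \<le> real (N - m) * log 2 (real CARD('a))"
  by (rule mi_len_bound) (use proc_len[OF pr] in auto)

lemma P0: "is_process P \<Longrightarrow> P 0 = return_pmf []"
  by (subst set_pmf_subset_singleton[symmetric]) (auto dest: proc_len)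

lemma prod_split_add: "(\<Prod>i<k + l. F i) = (\<Prod>i<k. F i) * (\<Prod>i<l. F (k + i))"
  for F :: "nat \<Rightarrow> real"
  by (induction l) (simp_all add: mult.assoc)

lemma blk_app1: "length u = k * b \<Longrightarrow> i < k \<Longrightarrow> blk b i (u @ v) = blk b i u"
proof -
  assume a: "length u = k * b" "i < k"
  then have "i * b + b \<le> length u"
    by (metis add.commute mult.commute mult_le_mono2 Suc_leI mult_Suc_right)
  then show ?thesis unfolding blk_def by simp
qed

lemma blk_app2: "length u = k * b \<Longrightarrow> blk b (k + i) (u @ v) = blk b i v"
  unfolding blk_def by (simp add: algebra_simps)

lemma block_prod:
  assumes pr: "is_process P" and bi: "block_independent P b"
    and len: "length x = t * b"
  shows "pmf (P (t * b)) x = (\<Prod>i<t. pmf (P b) (blk b i x))"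
proof (cases "t = 0")
  case True
  then show ?thesis using len by (simp add: P0[OF pr])
next
  case False
  then show ?thesis using bi len by (simp add: block_independent_def)
qed

lemma block_app:
  assumes pr: "is_process P" and bi: "block_independent P b"
    and lu: "length u = k * b" and lv: "length v = l * b"
  shows "pmf (P ((k + l) * b)) (u @ v) = pmf (P (k * b)) u * pmf (P (l * b)) v"
proof -
  have "pmf (P ((k + l) * b)) (u @ v) = (\<Prod>i<k + l. pmf (P b) (blk b i (u @ v)))"
    by (rule block_prod[OF pr bi]) (simp add: lu lv algebra_simps)
  also have "\<dots> = (\<Prod>i<k. pmf (P b) (blk b i (u @ v))) * (\<Prod>i<l. pmf (P b) (blk b (k + i) (u @ v)))"
    by (rule prod_split_add)
  also have "(\<Prod>i<k. pmf (P b) (blk b i (u @ v))) = (\<Prod>i<k. pmf (P b) (blk b i u))"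
    by (intro prod.cong) (auto simp: blk_app1[OF lu])
  also have "(\<Prod>i<l. pmf (P b) (blk b (k + i) (u @ v))) = (\<Prod>i<l. pmf (P b) (blk b i v))"
    by (intro prod.cong) (auto simp: blk_app2[OF lu])
  finally show ?thesis
    using block_prod[OF pr bi lu] block_prod[OF pr bi lv] by simp
qed

lemma block_drop_mult:
  fixes P :: "nat \<Rightarrow> ('a::finite) list pmf"
  assumes pr: "is_process P" and bi: "block_independent P b"
  shows "map_pmf (drop (k * b)) (P ((k + l) * b)) = P (l * b)"
proof (rule pmf_eqI)
  fix v :: "'a list"
  let ?m = "k * b" and ?T = "(k + l) * b"
  show "pmf (map_pmf (drop ?m) (P ?T)) v = pmf (P (l * b)) v"
  proof (cases "length v = l * b")
    case False
    have ld: "\<And>w. w \<in> set_pmf (P ?T) \<Longrightarrow> length (drop ?m w) = l * b"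
      using proc_len[OF pr] by (simp add: add_mult_distrib)
    have "drop ?m -` {v} \<inter> set_pmf (P ?T) = {}"
      using False ld by blast
    moreover have "pmf (map_pmf (drop ?m) (P ?T)) v = measure (P ?T) (drop ?m -` {v} \<inter> set_pmf (P ?T))"
      by (simp only: pmf_map measure_Int_set_pmf)
    ultimately have "pmf (map_pmf (drop ?m) (P ?T)) v = 0" by simp
    moreover have "pmf (P (l * b)) v = 0"
      using False proc_len[OF pr, of v "l * b"] by (auto simp: set_pmf_iff)
    ultimately show ?thesis by simp
  next
    case True
    define U where "U = {u :: 'a list. length u = ?m}"
    have finU: "finite U" unfolding U_def by (rule lists_fin)
    have "drop ?m -` {v} \<inter> set_pmf (P ?T) = ((\<lambda>u. u @ v) ` U) \<inter> set_pmf (P ?T)"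
    proof (intro equalityI subsetI)
      fix w assume w: "w \<in> drop ?m -` {v} \<inter> set_pmf (P ?T)"
      then have "length w = ?T" using proc_len[OF pr] by blast
      then have "length (take ?m w) = ?m" by (simp add: add_mult_distrib)
      moreover have "w = take ?m w @ v" using w append_take_drop_id[of ?m w] by simp
      ultimately have "w = take ?m w @ v" "take ?m w \<in> U" by (simp_all add: U_def)
      then show "w \<in> ((\<lambda>u. u @ v) ` U) \<inter> set_pmf (P ?T)" using w by blast
    next
      fix w assume "w \<in> ((\<lambda>u. u @ v) ` U) \<inter> set_pmf (P ?T)"
      then show "w \<in> drop ?m -` {v} \<inter> set_pmf (P ?T)" by (auto simp: U_def)
    qed
    moreover have "pmf (map_pmf (drop ?m) (P ?T)) v = measure (P ?T) (drop ?m -` {v} \<inter> set_pmf (P ?T))"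
      by (simp only: pmf_map measure_Int_set_pmf)
    ultimately have "pmf (map_pmf (drop ?m) (P ?T)) v = measure (P ?T) ((\<lambda>u. u @ v) ` U)"
      by (simp only: measure_Int_set_pmf)
    also have "\<dots> = (\<Sum>w\<in>(\<lambda>u. u @ v) ` U. pmf (P ?T) w)"
      using finU by (simp add: measure_measure_pmf_finite)
    also have "\<dots> = (\<Sum>u\<in>U. pmf (P ?T) (u @ v))"
      by (subst sum.reindex) (simp_all add: inj_on_def)
    also have "\<dots> = (\<Sum>u\<in>U. pmf (P ?m) u * pmf (P (l * b)) v)"
      by (intro sum.cong refl block_app[OF pr bi]) (auto simp: U_def True)
    also have "\<dots> = (\<Sum>u\<in>U. pmf (P ?m) u) * pmf (P (l * b)) v"
      by (simp add: sum_distrib_right)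
    also have "(\<Sum>u\<in>U. pmf (P ?m) u) = 1"
      using finU proc_len[OF pr, of _ ?m] by (intro sum_pmf_eq_1) (auto simp: U_def)
    finally show ?thesis by simp
  qed
qed

lemma block_drop:
  fixes P :: "nat \<Rightarrow> ('a::finite) list pmf"
  assumes pr: "is_process P" and bi: "block_independent P b" and b1: "1 \<le> b"
    and mN: "k * b \<le> N"
  shows "map_pmf (drop (k * b)) (P N) = P (N - k * b)"
proof -
  define l where "l = N * b - k * b"
  have Nb: "N \<le> N * b" using b1 by simp
  have "k \<le> k * b" using b1 by (metis mult_1_right mult_le_mono2)
  then have kN: "k \<le> N" using mN by linarith
  have kl: "k + (N - k) = N" using kN by simp
  have T: "(k + (N - k)) * b = N * b" using kl by simp
  have "map_pmf (drop (k * b)) (P N) = map_pmf (drop (k * b)) (map_pmf (take N) (P (N * b)))"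
    by (simp add: proc_take[OF pr Nb])
  also have "\<dots> = map_pmf (take (N - k * b)) (map_pmf (drop (k * b)) (P (N * b)))"
    by (simp add: map_pmf_comp drop_take)
  also have "map_pmf (drop (k * b)) (P (N * b)) = P ((N - k) * b)"
    using block_drop_mult[OF pr bi, of k "N - k"] T by simp
  also have "map_pmf (take (N - k * b)) (P ((N - k) * b)) = P (N - k * b)"
    by (rule proc_take[OF pr]) (simp add: diff_mult_distrib diff_le_mono Nb)
  finally show ?thesis .
qed

lemma conv_lemma:
  fixes a :: "nat \<Rightarrow> real" and b0 :: nat and c :: real
  assumes b0: "1 \<le> b0" and c0: "0 \<le> c"
    and H0: "\<And>n. 0 \<le> a n"
    and H1: "\<And>n. a n \<le> real n * c"
    and H2: "\<And>m N. 1 \<le> m \<Longrightarrow> m \<le> N \<Longrightarrow> a N \<le> a m + real (N - m) * c"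
    and H3: "\<And>k n. 1 \<le> k \<Longrightarrow> a (k * b0 + n) \<le> a (k * b0) + a n"
  shows "\<exists>L. (\<lambda>n. a n / real n) \<longlonglongrightarrow> L"
proof -
  define S where "S = (\<lambda>k. a (k * b0) / real (k * b0)) ` {1..}"
  define L where "L = Inf S"
  have Sne: "S \<noteq> {}" by (auto simp: S_def)
  have Sbdd: "bdd_below S" unfolding S_def
    by (rule bdd_belowI[of _ 0]) (auto intro!: divide_nonneg_nonneg H0)
  have L0: "0 \<le> L" unfolding L_def
    by (rule cInf_greatest[OF Sne]) (auto simp: S_def intro!: divide_nonneg_nonneg H0)
  have LS: "\<And>k. 1 \<le> k \<Longrightarrow> L \<le> a (k * b0) / real (k * b0)"
    unfolding L_def by (rule cInf_lower[OF _ Sbdd]) (auto simp: S_def)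
  have iter: "\<And>k q r. 1 \<le> k \<Longrightarrow> a (q * (k * b0) + r) \<le> real q * a (k * b0) + a r"
  proof -
    fix k q r :: nat assume k: "1 \<le> k"
    show "a (q * (k * b0) + r) \<le> real q * a (k * b0) + a r"
    proof (induction q)
      case 0 then show ?case by simp
    next
      case (Suc q)
      have "a (Suc q * (k * b0) + r) = a (k * b0 + (q * (k * b0) + r))"
        by (simp add: algebra_simps)
      also have "\<dots> \<le> a (k * b0) + a (q * (k * b0) + r)" by (rule H3[OF k])
      also have "\<dots> \<le> a (k * b0) + (real q * a (k * b0) + a r)" using Suc by simp
      finally show ?case by (simp add: algebra_simps)
    qed
  qed
  have upper: "\<And>k n. 1 \<le> k \<Longrightarrow> 1 \<le> n \<Longrightarrow>
      a n / real n \<le> a (k * b0) / real (k * b0) + real (k * b0) * c / real n"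
  proof -
    fix k n :: nat assume k: "1 \<le> k" and n: "1 \<le> n"
    define b where "b = k * b0"
    have b1: "1 \<le> b" using k b0 by (simp add: b_def)
    have "a n = a ((n div b) * b + n mod b)" by simp
    also have "\<dots> \<le> real (n div b) * a b + a (n mod b)" unfolding b_def by (rule iter[OF k])
    also have "a (n mod b) \<le> real (n mod b) * c" by (rule H1)
    also have "real (n mod b) * c \<le> real b * c"
      using b1 c0 by (intro mult_right_mono) (auto simp: less_imp_le)
    also have "real (n div b) * a b \<le> (real n / real b) * a b"
    proof (rule mult_right_mono[OF _ H0])
      have "n div b * b \<le> n" using div_mult_mod_eq[of n b] by linarith
      then have "real (n div b) * real b \<le> real n"
        by (metis of_nat_le_iff of_nat_mult)
      then show "real (n div b) \<le> real n / real b" using b1 by (simp add: field_simps)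
    qed
    finally have "a n \<le> real n / real b * a b + real b * c" by simp
    then have "a n / real n \<le> (real n / real b * a b + real b * c) / real n"
      using n by (intro divide_right_mono) auto
    also have "\<dots> = a b / real b + real b * c / real n"
      using n b1 by (simp add: field_simps)
    finally show "a n / real n \<le> a (k * b0) / real (k * b0) + real (k * b0) * c / real n"
      by (simp add: b_def)
  qed
  have lower: "\<And>n. 1 \<le> n \<Longrightarrow> L - real b0 * c / real n \<le> a n / real n"
  proof -
    fix n :: nat assume n: "1 \<le> n"
    define k where "k = n div b0 + 1"
    define N where "N = k * b0"
    have nN: "n \<le> N" unfolding N_def k_def
      by (metis add.commute b0 div_mult_mod_eq less_imp_le_nat mod_less_divisor
          add_le_cancel_left distrib_right mult_1 le_less_trans less_one not_le)
    have Nn: "N - n \<le> b0" unfolding N_def k_def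
    proof -
      have h: "n div b0 * b0 \<le> n" using div_mult_mod_eq[of n b0] by linarith
      have "(n div b0 + 1) * b0 = n div b0 * b0 + b0" by simp
      then show "(n div b0 + 1) * b0 - n \<le> b0" using h by arith
    qed
    have h1: "a N \<le> a n + real (N - n) * c" by (rule H2[OF n nN])
    have h2: "real (N - n) * c \<le> real b0 * c" using Nn c0 by (intro mult_right_mono) auto
    have aN: "a N \<le> a n + real b0 * c" using h1 h2 by linarith
    have "L \<le> a N / real N" unfolding N_def by (rule LS) (simp add: k_def)
    then have "L * real N \<le> a N" using n nN by (simp add: field_simps)
    moreover have "L * real n \<le> L * real N" using L0 nN by (intro mult_left_mono) auto
    ultimately have i: "L * real n - real b0 * c \<le> a n" using aN by linarith
    have e: "L - real b0 * c / real n = (L * real n - real b0 * c) / real n"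
      using n by (simp add: field_simps)
    show "L - real b0 * c / real n \<le> a n / real n"
      unfolding e using i n by (intro divide_right_mono) auto
  qed
  have "(\<lambda>n. a n / real n) \<longlonglongrightarrow> L"
  proof (rule LIMSEQ_I)
    fix r :: real assume r: "0 < r"
    have "Inf S < L + r / 2" using r by (simp add: L_def)
    then obtain x where "x \<in> S" "x < L + r / 2" using cInf_lessD[OF Sne] by blast
    then obtain k where k: "1 \<le> k" and ak: "a (k * b0) / real (k * b0) < L + r / 2"
      by (auto simp: S_def)
    define M where "M = (real (k * b0) + real b0) * c"
    have M0: "0 \<le> M" using c0 by (simp add: M_def)
    obtain no :: nat where no: "2 * M / r < real no" using reals_Archimedean2 by blast
    show "\<exists>no. \<forall>n\<ge>no. norm (a n / real n - L) < r"
    proof (intro exI allI impI)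
      fix n assume "Suc no \<le> n"
      then have n1: "1 \<le> n" and nno: "real no < real n" by auto
      then have "2 * M / r < real n" using no by linarith
      then have Mn: "M / real n < r / 2" using r n1 by (simp add: field_simps)
      have t1: "real (k * b0) * c / real n \<le> M / real n"
        using n1 c0 by (intro divide_right_mono) (auto simp: M_def algebra_simps)
      have t2: "real b0 * c / real n \<le> M / real n"
        using n1 c0 by (intro divide_right_mono) (auto simp: M_def algebra_simps)
      have u: "a n / real n \<le> a (k * b0) / real (k * b0) + real (k * b0) * c / real n"
        by (rule upper[OF k n1])
      have l: "L - real b0 * c / real n \<le> a n / real n" by (rule lower[OF n1])
      have g1: "a n / real n - L < r" using u ak t1 Mn by linarith
      have g2: "- (a n / real n - L) < r" using l t2 Mn r by linarith
      show "norm (a n / real n - L) < r" unfolding real_norm_def abs_less_iff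
        using g1 g2 by (intro conjI)
    qed
  qed
  then show ?thesis by blast
qed

theorem lemma3p5:
  fixes P :: "nat \<Rightarrow> ('a::finite) list pmf"
    and Z :: "'a list \<Rightarrow> 'b pmf"
    and Zs :: "'a list \<Rightarrow> 'c pmf"
  assumes "block_indep_process P"
    and "admissible Z Zs"
  shows "info_rate P Z = info_rate P Zs \<and>
         (\<exists>L. (\<lambda>n. info_n P Zs n / real n) \<longlonglongrightarrow> L \<and> info_rate P Zs = ereal L)"
proof -
  obtain b0 where pr: "is_process P" and b0: "1 \<le> b0" and bi: "block_independent P b0"
    using assms(1) unfolding block_indep_process_def by blast
  have A2: "\<forall>P. is_process P \<longrightarrow> info_rate P Z = info_rate P Zs"
    using assms(2) unfolding admissible_def by (elim conjE)
  have A3: "\<forall>P m n. is_process P \<longrightarrow> 1 \<le> m \<longrightarrow> m \<le> n \<longrightarrow>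
      (\<exists>q :: ('a list \<times> ('c \<times> 'c) \<times> 'c) pmf.
         map_pmf (\<lambda>(x, zz, z). (x, zz)) q = chan_joint2 Zs (take m) (drop m) (P n) \<and>
         map_pmf (\<lambda>(x, zz, z). (x, z)) q = chan_joint Zs (P n) \<and>
         markov q)"
    using assms(2) unfolding admissible_def by (elim conjE)
  define c where "c = log 2 (real CARD('a))"
  have c0: "0 \<le> c" unfolding c_def by simp
  have H0: "\<And>n. 0 \<le> info_n P Zs n" by (rule info_nonneg[OF pr])
  have H1: "\<And>n. info_n P Zs n \<le> real n * c" unfolding c_def by (rule info_le[OF pr])
  have H2: "\<And>m N. 1 \<le> m \<Longrightarrow> m \<le> N \<Longrightarrow> info_n P Zs N \<le> info_n P Zs m + real (N - m) * c"
  proof -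
    fix m N :: nat assume m: "1 \<le> m" "m \<le> N"
    show "info_n P Zs N \<le> info_n P Zs m + real (N - m) * c"
      using chain_bound[OF pr A3 m] drop_bound[OF pr, of Zs m N] unfolding c_def by linarith
  qed
  have H3: "\<And>k n. 1 \<le> k \<Longrightarrow> info_n P Zs (k * b0 + n) \<le> info_n P Zs (k * b0) + info_n P Zs n"
  proof -
    fix k n :: nat assume k: "1 \<le> k"
    have m1: "1 \<le> k * b0" using k b0 by simp
    have "map_pmf (drop (k * b0)) (P (k * b0 + n)) = P n"
      using block_drop[OF pr bi b0, of k "k * b0 + n"] by simp
    then show "info_n P Zs (k * b0 + n) \<le> info_n P Zs (k * b0) + info_n P Zs n"
      using chain_bound[OF pr A3 m1, of "k * b0 + n"] by (simp add: info_n_def)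
  qed
  obtain L where L: "(\<lambda>n. info_n P Zs n / real n) \<longlonglongrightarrow> L"
    using conv_lemma[of b0 c "info_n P Zs", OF b0 c0 H0 H1 H2 H3] by blast
  have "info_rate P Zs = ereal L"
    unfolding info_rate_def
    by (rule lim_imp_Liminf[OF trivial_limit_sequentially]) (rule tendsto_ereal[OF L])
  then show ?thesis using A2 pr L by blast
qed

end
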